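(* Let $i\in[n]$ and $M_i=\{\beta\in\Phi^+\mid\beta\ge\alpha_i\}$. If $M_i$ is an abelian ideal, then it is a maximal abelian ideal (with respect to inclusion).
   Context: $\Phi$ is a finite irreducible crystallographic root system with basis $\Pi=\{\alpha_1,\dots,\alpha_n\}$ and positive roots $\Phi^+$. The root poset is $\Phi^+$ with $\beta\ge\gamma$ iff $\beta-\gamma$ is a nonnegative integer combination of simple roots. An abelian ideal is a subset $I\subseteq\Phi^+$ closed upward in the root poset with $(I+I)\cap\Phi=\emptyset$. *)

theory Defs
  imports "HOL-Analysis.Analysis"
begin

definition root_system :: "'a::euclidean_space set \<Rightarrow> bool" where
  "root_system \<Phi> \<longleftrightarrow>
     finite \<Phi> \<and> 0 \<notin> \<Phi> \<and> span \<Phi> = UNIV \<and>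
     (\<forall>\<alpha>\<in>\<Phi>. \<forall>\<beta>\<in>\<Phi>. \<beta> - (2 * (\<beta> \<bullet> \<alpha>) / (\<alpha> \<bullet> \<alpha>)) *\<^sub>R \<alpha> \<in> \<Phi>) \<and>
     (\<forall>\<alpha>\<in>\<Phi>. \<forall>\<beta>\<in>\<Phi>. 2 * (\<beta> \<bullet> \<alpha>) / (\<alpha> \<bullet> \<alpha>) \<in> \<int>) \<and>
     (\<forall>\<alpha>\<in>\<Phi>. \<forall>c::real. c *\<^sub>R \<alpha> \<in> \<Phi> \<longrightarrow> c = 1 \<or> c = -1)"

definition irreducible_rs :: "'a::euclidean_space set \<Rightarrow> bool" where
  "irreducible_rs \<Phi> \<longleftrightarrow>
     \<not> (\<exists>A B. A \<union> B = \<Phi> \<and> A \<inter> B = {} \<and> A \<noteq> {} \<and> B \<noteq> {} \<and>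
            (\<forall>a\<in>A. \<forall>b\<in>B. a \<bullet> b = 0))"

definition simple_basis :: "'a::euclidean_space set \<Rightarrow> 'a set \<Rightarrow> bool" where
  "simple_basis \<Phi> \<Delta> \<longleftrightarrow>
     \<Delta> \<subseteq> \<Phi> \<and> independent \<Delta> \<and>
     (\<forall>\<beta>\<in>\<Phi>. \<exists>c::'a \<Rightarrow> int. \<beta> = (\<Sum>\<alpha>\<in>\<Delta>. of_int (c \<alpha>) *\<^sub>R \<alpha>) \<and>
                 ((\<forall>\<alpha>\<in>\<Delta>. c \<alpha> \<ge> 0) \<or> (\<forall>\<alpha>\<in>\<Delta>. c \<alpha> \<le> 0)))"

definition nonneg_comb :: "'a::euclidean_space set \<Rightarrow> 'a \<Rightarrow> bool" where
  "nonneg_comb \<Delta> v \<longleftrightarrow> (\<exists>c::'a \<Rightarrow> nat. v = (\<Sum>\<alpha>\<in>\<Delta>. of_nat (c \<alpha>) *\<^sub>R \<alpha>))"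

definition pos_roots :: "'a::euclidean_space set \<Rightarrow> 'a set \<Rightarrow> 'a set" where
  "pos_roots \<Phi> \<Delta> = {\<beta>\<in>\<Phi>. nonneg_comb \<Delta> \<beta>}"

text \<open>Root poset order: \<open>root_le \<Delta> \<gamma> \<beta>\<close> means \<open>\<gamma> \<le> \<beta>\<close>.\<close>
definition root_le :: "'a::euclidean_space set \<Rightarrow> 'a \<Rightarrow> 'a \<Rightarrow> bool" where
  "root_le \<Delta> \<gamma> \<beta> \<longleftrightarrow> nonneg_comb \<Delta> (\<beta> - \<gamma>)"

definition abelian_ideal :: "'a::euclidean_space set \<Rightarrow> 'a set \<Rightarrow> 'a set \<Rightarrow> bool" where
  "abelian_ideal \<Phi> \<Delta> I \<longleftrightarrow>
     I \<subseteq> pos_roots \<Phi> \<Delta> \<and>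
     (\<forall>\<beta>\<in>I. \<forall>\<gamma>\<in>pos_roots \<Phi> \<Delta>. root_le \<Delta> \<beta> \<gamma> \<longrightarrow> \<gamma> \<in> I) \<and>
     (\<forall>\<beta>\<in>I. \<forall>\<gamma>\<in>I. \<beta> + \<gamma> \<notin> \<Phi>)"

definition maximal_abelian_ideal :: "'a::euclidean_space set \<Rightarrow> 'a set \<Rightarrow> 'a set \<Rightarrow> bool" where
  "maximal_abelian_ideal \<Phi> \<Delta> I \<longleftrightarrow>
     abelian_ideal \<Phi> \<Delta> I \<and> (\<forall>J. abelian_ideal \<Phi> \<Delta> J \<and> I \<subseteq> J \<longrightarrow> J = I)"

end

theory Submission
  imports Defs
begin

locale RS =
  fixes \<Phi> \<Delta> :: "'a::euclidean_space set"
  assumes rs: "root_system \<Phi>" and sb: "simple_basis \<Phi> \<Delta>"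
begin

definition co :: "'a \<Rightarrow> 'a \<Rightarrow> real" where "co v a = representation \<Delta> v a"

lemma finPhi: "finite \<Phi>" using rs by (simp add: root_system_def)
lemma zPhi: "0 \<notin> \<Phi>" using rs by (simp add: root_system_def)
lemma refl_ax: "\<alpha> \<in> \<Phi> \<Longrightarrow> \<beta> \<in> \<Phi> \<Longrightarrow> \<beta> - (2 * (\<beta> \<bullet> \<alpha>) / (\<alpha> \<bullet> \<alpha>)) *\<^sub>R \<alpha> \<in> \<Phi>"
  using rs by (simp add: root_system_def)
lemma int_ax: "\<alpha> \<in> \<Phi> \<Longrightarrow> \<beta> \<in> \<Phi> \<Longrightarrow> 2 * (\<beta> \<bullet> \<alpha>) / (\<alpha> \<bullet> \<alpha>) \<in> \<int>"
  using rs by (simp add: root_system_def)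
lemma red_ax: "\<alpha> \<in> \<Phi> \<Longrightarrow> c *\<^sub>R \<alpha> \<in> \<Phi> \<Longrightarrow> c = 1 \<or> c = -1"
  using rs by (simp add: root_system_def)
lemma DsubPhi: "\<Delta> \<subseteq> \<Phi>" using sb by (simp add: simple_basis_def)
lemma finD: "finite \<Delta>" using DsubPhi finPhi finite_subset by blast
lemma indep: "independent \<Delta>" using sb by (simp add: simple_basis_def)

lemma pos_sq: "\<alpha> \<in> \<Phi> \<Longrightarrow> \<alpha> \<bullet> \<alpha> > 0"
  using zPhi by auto

lemma neg_root: assumes "\<beta> \<in> \<Phi>" shows "- \<beta> \<in> \<Phi>"
proof -
  have "\<beta> - (2 * (\<beta> \<bullet> \<beta>) / (\<beta> \<bullet> \<beta>)) *\<^sub>R \<beta> \<in> \<Phi>" using refl_ax[OF assms assms] .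
  moreover have "2 * (\<beta> \<bullet> \<beta>) / (\<beta> \<bullet> \<beta>) = 2" using pos_sq[OF assms] by simp
  ultimately have "\<beta> - 2 *\<^sub>R \<beta> \<in> \<Phi>" by simp
  moreover have "\<beta> - 2 *\<^sub>R \<beta> = - \<beta>" by (simp add: scaleR_2)
  ultimately show ?thesis by simp
qed

lemma sum_root:
  assumes b: "\<beta> \<in> \<Phi>" and g: "\<gamma> \<in> \<Phi>" and ne: "\<beta> \<noteq> - \<gamma>" and neg: "\<beta> \<bullet> \<gamma> < 0"
  shows "\<beta> + \<gamma> \<in> \<Phi>"
proof -
  have bb: "\<beta> \<bullet> \<beta> > 0" and gg: "\<gamma> \<bullet> \<gamma> > 0" using pos_sq b g by auto
  have strict: "(\<beta> \<bullet> \<gamma>)^2 < (\<beta> \<bullet> \<beta>) * (\<gamma> \<bullet> \<gamma>)"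
  proof (rule ccontr)
    assume "\<not> ?thesis"
    with Cauchy_Schwarz_ineq[of \<beta> \<gamma>] have eq: "(\<beta> \<bullet> \<gamma>)^2 = (\<beta> \<bullet> \<beta>) * (\<gamma> \<bullet> \<gamma>)" by linarith
    define c where "c = (\<beta> \<bullet> \<gamma>) / (\<gamma> \<bullet> \<gamma>)"
    have "(\<beta> - c *\<^sub>R \<gamma>) \<bullet> (\<beta> - c *\<^sub>R \<gamma>) = \<beta> \<bullet> \<beta> - 2 * c * (\<beta> \<bullet> \<gamma>) + c^2 * (\<gamma> \<bullet> \<gamma>)"
      by (simp add: inner_diff_left inner_diff_right inner_commute power2_eq_square algebra_simps)
    also have "\<dots> = 0" using eq gg unfolding c_def by (simp add: field_simps power2_eq_square)
    finally have "\<beta> = c *\<^sub>R \<gamma>" by simp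
    then have "c = 1 \<or> c = -1" using red_ax[OF g] b by simp
    then show False
    proof
      assume "c = 1" then have "\<beta> = \<gamma>" using \<open>\<beta> = c *\<^sub>R \<gamma>\<close> by simp
      then show False using neg gg by simp
    next
      assume "c = -1" then show False using \<open>\<beta> = c *\<^sub>R \<gamma>\<close> ne by simp
    qed
  qed
  obtain k1 where k1: "2 * (\<beta> \<bullet> \<gamma>) / (\<gamma> \<bullet> \<gamma>) = of_int k1" using int_ax[OF g b] Ints_cases by metis
  obtain k2 where k2: "2 * (\<gamma> \<bullet> \<beta>) / (\<beta> \<bullet> \<beta>) = of_int k2" using int_ax[OF b g] Ints_cases by metis
  have k1n: "k1 < 0"
  proof -
    have "2 * (\<beta> \<bullet> \<gamma>) / (\<gamma> \<bullet> \<gamma>) < 0" using neg gg by (simp add: divide_neg_pos)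
    then show ?thesis using k1 by simp
  qed
  have k2n: "k2 < 0"
  proof -
    have "2 * (\<gamma> \<bullet> \<beta>) / (\<beta> \<bullet> \<beta>) < 0" using neg bb by (simp add: divide_neg_pos inner_commute)
    then show ?thesis using k2 by simp
  qed
  have "of_int (k1 * k2) = 4 * (\<beta> \<bullet> \<gamma>)^2 / ((\<beta> \<bullet> \<beta>) * (\<gamma> \<bullet> \<gamma>))"
    using k1[symmetric] k2[symmetric] by (simp add: inner_commute power2_eq_square)
  also have "\<dots> < 4" using strict bb gg by (simp add: field_simps)
  finally have "k1 * k2 < 4" by linarith
  have "k1 = -1 \<or> k2 = -1"
  proof (rule ccontr)
    assume "\<not> ?thesis"
    then have "-k1 \<ge> 2" "-k2 \<ge> 2" using k1n k2n by auto
    then have "(-k1) * (-k2) \<ge> 2 * 2" using mult_mono[of "2::int" "-k1" 2 "-k2"] by simp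
    then show False using \<open>k1 * k2 < 4\<close> by simp
  qed
  then show ?thesis
  proof
    assume "k1 = -1"
    then show ?thesis using refl_ax[OF g b] k1 by simp
  next
    assume "k2 = -1"
    then show ?thesis using refl_ax[OF b g] k2 by (simp add: add.commute)
  qed
qed


lemma root_span: "\<rho> \<in> \<Phi> \<Longrightarrow> \<rho> \<in> span \<Delta>"
proof -
  assume "\<rho> \<in> \<Phi>"
  then obtain c :: "'a \<Rightarrow> int" where "\<rho> = (\<Sum>\<alpha>\<in>\<Delta>. of_int (c \<alpha>) *\<^sub>R \<alpha>)"
    using sb unfolding simple_basis_def by blast
  then show ?thesis by (simp add: span_sum span_scale span_base)
qed

lemma co_comb: "co (\<Sum>a\<in>\<Delta>. c a *\<^sub>R a) b = (if b \<in> \<Delta> then c b else 0)"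
proof -
  have "co (\<Sum>a\<in>\<Delta>. c a *\<^sub>R a) b = (\<Sum>a\<in>\<Delta>. representation \<Delta> (c a *\<^sub>R a) b)"
    unfolding co_def by (subst representation_sum[OF indep]) (auto simp: span_scale span_base)
  also have "\<dots> = (\<Sum>a\<in>\<Delta>. c a * (if b = a then 1 else 0))"
    by (rule sum.cong) (auto simp: representation_scale[OF indep] span_base representation_basis[OF indep])
  also have "\<dots> = (if b \<in> \<Delta> then c b else 0)" by (simp add: finD if_distrib cong: if_cong)
  finally show ?thesis .
qed

lemma expand: "v \<in> span \<Delta> \<Longrightarrow> (\<Sum>a\<in>\<Delta>. co v a *\<^sub>R a) = v"
  unfolding co_def using sum_representation_eq[OF indep _ finD] by blast

lemma co_simple: "a \<in> \<Delta> \<Longrightarrow> co a b = (if b = a then 1 else 0)"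
  unfolding co_def by (simp add: representation_basis[OF indep])

lemma co_add: "u \<in> span \<Delta> \<Longrightarrow> v \<in> span \<Delta> \<Longrightarrow> co (u + v) b = co u b + co v b"
  unfolding co_def by (simp add: representation_add[OF indep])
lemma co_diff: "u \<in> span \<Delta> \<Longrightarrow> v \<in> span \<Delta> \<Longrightarrow> co (u - v) b = co u b - co v b"
  unfolding co_def by (simp add: representation_diff[OF indep])
lemma co_neg: "v \<in> span \<Delta> \<Longrightarrow> co (- v) b = - co v b"
  unfolding co_def by (simp add: representation_neg[OF indep])

lemma root_co:
  assumes "\<rho> \<in> \<Phi>"
  shows "\<forall>a\<in>\<Delta>. co \<rho> a \<in> \<int>" "(\<forall>a\<in>\<Delta>. co \<rho> a \<ge> 0) \<or> (\<forall>a\<in>\<Delta>. co \<rho> a \<le> 0)"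
proof -
  obtain c :: "'a \<Rightarrow> int" where c: "\<rho> = (\<Sum>\<alpha>\<in>\<Delta>. of_int (c \<alpha>) *\<^sub>R \<alpha>)"
      "(\<forall>\<alpha>\<in>\<Delta>. c \<alpha> \<ge> 0) \<or> (\<forall>\<alpha>\<in>\<Delta>. c \<alpha> \<le> 0)"
    using sb assms unfolding simple_basis_def by blast
  have e: "a \<in> \<Delta> \<Longrightarrow> co \<rho> a = of_int (c a)" for a
    using co_comb[of "\<lambda>a. of_int (c a)" a] c(1) by simp
  show "\<forall>a\<in>\<Delta>. co \<rho> a \<in> \<int>" using e by simp
  show "(\<forall>a\<in>\<Delta>. co \<rho> a \<ge> 0) \<or> (\<forall>a\<in>\<Delta>. co \<rho> a \<le> 0)" using e c(2) by simp
qed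

definition ints :: "'a \<Rightarrow> bool" where "ints v \<longleftrightarrow> v \<in> span \<Delta> \<and> (\<forall>a\<in>\<Delta>. co v a \<in> \<int>)"

lemma ints_root: "\<rho> \<in> \<Phi> \<Longrightarrow> ints \<rho>" using root_co root_span ints_def by blast
lemma ints_add: "ints u \<Longrightarrow> ints v \<Longrightarrow> ints (u + v)"
  by (simp add: ints_def co_add span_add)
lemma ints_diff: "ints u \<Longrightarrow> ints v \<Longrightarrow> ints (u - v)"
  by (simp add: ints_def co_diff span_diff)

lemma nonneg_iff:
  assumes "ints v" shows "nonneg_comb \<Delta> v \<longleftrightarrow> (\<forall>a\<in>\<Delta>. co v a \<ge> 0)"
proof
  assume "nonneg_comb \<Delta> v"
  then obtain c :: "'a \<Rightarrow> nat" where "v = (\<Sum>\<alpha>\<in>\<Delta>. of_nat (c \<alpha>) *\<^sub>R \<alpha>)"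
    unfolding nonneg_comb_def by blast
  then show "\<forall>a\<in>\<Delta>. co v a \<ge> 0" using co_comb[of "\<lambda>a. of_nat (c a)"] by simp
next
  assume nn: "\<forall>a\<in>\<Delta>. co v a \<ge> 0"
  define c where "c a = nat \<lfloor>co v a\<rfloor>" for a
  have "a \<in> \<Delta> \<Longrightarrow> of_nat (c a) = co v a" for a
    using nn assms unfolding ints_def c_def by (auto elim!: Ints_cases)
  then have "v = (\<Sum>\<alpha>\<in>\<Delta>. of_nat (c \<alpha>) *\<^sub>R \<alpha>)"
    using expand[of v] assms unfolding ints_def by (metis (no_types, lifting) sum.cong)
  then show "nonneg_comb \<Delta> v" unfolding nonneg_comb_def by blast
qed

lemma pos_iff: "\<rho> \<in> \<Phi> \<Longrightarrow> \<rho> \<in> pos_roots \<Phi> \<Delta> \<longleftrightarrow> (\<forall>a\<in>\<Delta>. co \<rho> a \<ge> 0)"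
  unfolding pos_roots_def using nonneg_iff ints_root by auto

lemma le_iff: "ints u \<Longrightarrow> ints v \<Longrightarrow> root_le \<Delta> u v \<longleftrightarrow> (\<forall>a\<in>\<Delta>. co u a \<le> co v a)"
  unfolding root_le_def using nonneg_iff[OF ints_diff, of v u]
  by (simp add: co_diff ints_def)

lemma simple_nonpos:
  assumes s: "s \<in> \<Delta>" and t: "t \<in> \<Delta>" and ne: "s \<noteq> t" shows "s \<bullet> t \<le> 0"
proof (rule ccontr)
  assume "\<not> ?thesis"
  then have "s \<bullet> (- t) < 0" by simp
  moreover have "s \<in> \<Phi>" "- t \<in> \<Phi>" using s t DsubPhi neg_root by auto
  moreover have "s \<noteq> - (- t)" using ne by simp
  ultimately have r: "s + - t \<in> \<Phi>" using sum_root by blast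
  have "co (s + - t) s = 1" "co (s + - t) t = -1"
    using s t ne by (simp_all add: co_diff span_base co_simple)
  then show False using root_co(2)[OF r] s t by force
qed


definition pure :: "'a set \<Rightarrow> 'a \<Rightarrow> bool" where
  "pure S \<rho> \<longleftrightarrow> (\<forall>t\<in>\<Delta>-S. co \<rho> t = 0) \<or> (\<forall>s\<in>S. co \<rho> s = 0)"
definition orth :: "'a set \<Rightarrow> bool" where
  "orth S \<longleftrightarrow> (\<forall>s\<in>S. \<forall>t\<in>\<Delta>-S. s \<bullet> t = 0)"

lemma core:
  assumes S: "S \<subseteq> \<Delta>" "orth S" and r: "\<rho> \<in> \<Phi>" and a: "a \<in> S" and r': "\<rho>' \<in> \<Phi>"
    and eq: "\<rho> = \<rho>' + a" and z: "\<forall>s\<in>S. co \<rho>' s = 0" and t: "t \<in> \<Delta> - S" and tp: "co \<rho>' t > 0"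
  shows False
proof -
  have aD: "a \<in> \<Delta>" using a S by auto
  have aP: "a \<in> \<Phi>" using aD DsubPhi by auto
  have "\<rho>' \<bullet> a = (\<Sum>x\<in>\<Delta>. co \<rho>' x *\<^sub>R x) \<bullet> a" using expand[OF root_span[OF r']] by simp
  also have "\<dots> = (\<Sum>x\<in>\<Delta>. co \<rho>' x * (x \<bullet> a))" by (simp add: inner_sum_left)
  also have "\<dots> = 0"
  proof (rule sum.neutral, rule ballI)
    fix x assume x: "x \<in> \<Delta>"
    show "co \<rho>' x * (x \<bullet> a) = 0"
    proof (cases "x \<in> S")
      case True then show ?thesis using z by simp
    next
      case False then have "a \<bullet> x = 0" using S(2) a x unfolding orth_def by blast
      then show ?thesis by (simp add: inner_commute)
    qed
  qed
  finally have "\<rho>' \<bullet> a = 0" .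
  then have ra: "\<rho> \<bullet> a = a \<bullet> a" using eq by (simp add: inner_add_left)
  have "\<rho> - (2 * (\<rho> \<bullet> a) / (a \<bullet> a)) *\<^sub>R a \<in> \<Phi>" using refl_ax[OF aP r] .
  moreover have "2 * (\<rho> \<bullet> a) / (a \<bullet> a) = 2" using ra pos_sq[OF aP] by simp
  ultimately have "\<rho> - 2 *\<^sub>R a \<in> \<Phi>" by simp
  moreover have "\<rho> - 2 *\<^sub>R a = \<rho>' - a" using eq by (simp add: scaleR_2)
  ultimately have m: "\<rho>' - a \<in> \<Phi>" by simp
  have "co (\<rho>' - a) a = -1" using z a aD by (simp add: co_diff root_span[OF r'] span_base co_simple)
  moreover have "co (\<rho>' - a) t = co \<rho>' t" using t a aD by (auto simp add: co_diff root_span[OF r'] span_base co_simple)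
  ultimately show False using root_co(2)[OF m] aD t tp by force
qed

lemma decomp_pos:
  "\<forall>S \<rho>. S \<subseteq> \<Delta> \<longrightarrow> orth S \<longrightarrow> \<rho> \<in> \<Phi> \<longrightarrow> (\<forall>a\<in>\<Delta>. co \<rho> a \<ge> 0) \<longrightarrow> (\<Sum>a\<in>\<Delta>. co \<rho> a) < real n \<longrightarrow> pure S \<rho>"
proof (induction n)
  case 0
  then show ?case using sum_nonneg by (metis not_less of_nat_0)
next
  case (Suc n)
  show ?case
  proof (intro allI impI)
    fix S \<rho>
    assume S: "S \<subseteq> \<Delta>" and o: "orth S" and r: "\<rho> \<in> \<Phi>" and nn: "\<forall>a\<in>\<Delta>. co \<rho> a \<ge> 0"
      and lt: "(\<Sum>a\<in>\<Delta>. co \<rho> a) < real (Suc n)"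
    show "pure S \<rho>"
    proof (rule ccontr)
      assume np: "\<not> pure S \<rho>"
      then obtain t s where t: "t \<in> \<Delta> - S" "co \<rho> t \<noteq> 0" and s: "s \<in> S" "co \<rho> s \<noteq> 0"
        unfolding pure_def by blast
      have tp: "co \<rho> t > 0" using t nn by (metis DiffD1 order_le_less)
      have sD: "s \<in> \<Delta>" using s S by auto
      have sp: "co \<rho> s > 0" using s sD nn by (metis order_le_less)
      have rs: "\<rho> \<in> span \<Delta>" using root_span[OF r] .
      have "0 < \<rho> \<bullet> \<rho>" using pos_sq[OF r] .
      also have "\<rho> \<bullet> \<rho> = (\<Sum>x\<in>\<Delta>. co \<rho> x *\<^sub>R x) \<bullet> \<rho>" using expand[OF rs] by simp
      also have "\<dots> = (\<Sum>x\<in>\<Delta>. co \<rho> x * (x \<bullet> \<rho>))" by (simp add: inner_sum_left)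
      finally have "\<exists>a\<in>\<Delta>. a \<bullet> \<rho> > 0"
        using sum_nonpos[of \<Delta> "\<lambda>x. co \<rho> x * (x \<bullet> \<rho>)"] nn
        by (metis linorder_not_le mult_nonneg_nonpos not_le)
      then obtain a where aD: "a \<in> \<Delta>" and ap: "\<rho> \<bullet> a > 0" by (auto simp: inner_commute)
      have aP: "a \<in> \<Phi>" using aD DsubPhi by auto
      have "\<rho> \<noteq> a"
      proof
        assume "\<rho> = a"
        then have "s = a" "t = a" using sp tp co_simple[OF aD] by (auto split: if_splits)
        then show False using s t by auto
      qed
      then have r': "\<rho> + - a \<in> \<Phi>" using sum_root[OF r neg_root[OF aP]] ap by simp
      define \<rho>' where "\<rho>' = \<rho> - a"
      have r'P: "\<rho>' \<in> \<Phi>" using r' unfolding \<rho>'_def by simp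
      have co': "co \<rho>' x = co \<rho> x - (if x = a then 1 else 0)" for x
        unfolding \<rho>'_def using co_diff[OF rs span_base[OF aD]] co_simple[OF aD] by simp
      have eq: "\<rho> = \<rho>' + a" unfolding \<rho>'_def by simp
      have sumlt: "(\<Sum>x\<in>\<Delta>. co \<rho>' x) < real n"
      proof -
        have "(\<Sum>x\<in>\<Delta>. co \<rho>' x) = (\<Sum>x\<in>\<Delta>. co \<rho> x) - (\<Sum>x\<in>\<Delta>. (if x = a then 1 else 0))"
          by (simp add: co' sum_subtractf)
        also have "(\<Sum>x\<in>\<Delta>. (if x = a then 1 else (0::real))) = 1" using aD finD by simp
        finally show ?thesis using lt by simp
      qed
      show False
      proof (cases "a \<in> S")
        case True
        have "co \<rho>' t = co \<rho> t" using t True by (auto simp: co')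
        then have t': "co \<rho>' t > 0" using tp by simp
        then have nn': "\<forall>x\<in>\<Delta>. co \<rho>' x \<ge> 0" using root_co(2)[OF r'P] t by force
        have "pure S \<rho>'" using Suc.IH S o r'P nn' sumlt by blast
        then have "\<forall>s\<in>S. co \<rho>' s = 0" using t t' unfolding pure_def by auto
        then show False using core[OF S o r True r'P eq _ t(1) t'] by blast
      next
        case False
        have "co \<rho>' s = co \<rho> s" using s False by (auto simp: co')
        then have s': "co \<rho>' s > 0" using sp by simp
        then have nn': "\<forall>x\<in>\<Delta>. co \<rho>' x \<ge> 0" using root_co(2)[OF r'P] sD by force
        have S': "\<Delta> - S \<subseteq> \<Delta>" by auto
        have DD: "\<Delta> - (\<Delta> - S) = S" using S by auto
        have o': "orth (\<Delta> - S)" using o unfolding orth_def DD by (metis inner_commute)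
        have "pure (\<Delta> - S) \<rho>'" using Suc.IH S' o' r'P nn' sumlt by blast
        then have "\<forall>x\<in>\<Delta> - S. co \<rho>' x = 0" using s s' DD unfolding pure_def by auto
        moreover have "a \<in> \<Delta> - S" using aD False by auto
        moreover have "s \<in> \<Delta> - (\<Delta> - S)" using DD s by simp
        ultimately show False using core[OF S' o' r _ r'P eq _ _ s'] by blast
      qed
    qed
  qed
qed

lemma decomp:
  assumes S: "S \<subseteq> \<Delta>" "orth S" and r: "\<rho> \<in> \<Phi>" shows "pure S \<rho>"
proof -
  have gen: "pure S \<sigma>" if "\<sigma> \<in> \<Phi>" "\<forall>a\<in>\<Delta>. co \<sigma> a \<ge> 0" for \<sigma>
  proof -
    obtain n :: nat where "(\<Sum>a\<in>\<Delta>. co \<sigma> a) < real n" using reals_Archimedean2 by blast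
    then show ?thesis using decomp_pos[of n] S that by blast
  qed
  from root_co(2)[OF r] show ?thesis
  proof
    assume "\<forall>a\<in>\<Delta>. co \<rho> a \<ge> 0" then show ?thesis using gen r by blast
  next
    assume neg: "\<forall>a\<in>\<Delta>. co \<rho> a \<le> 0"
    have "pure S (- \<rho>)" using gen[OF neg_root[OF r]] neg co_neg[OF root_span[OF r]] by simp
    then show ?thesis unfolding pure_def using co_neg[OF root_span[OF r]] by simp
  qed
qed


lemma main:
  assumes irr: "irreducible_rs \<Phi>" and aD: "\<alpha> \<in> \<Delta>"
    and J: "abelian_ideal \<Phi> \<Delta> J" and sub: "{\<beta> \<in> pos_roots \<Phi> \<Delta>. root_le \<Delta> \<alpha> \<beta>} \<subseteq> J"
  shows "J \<subseteq> {\<beta> \<in> pos_roots \<Phi> \<Delta>. root_le \<Delta> \<alpha> \<beta>}"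
proof (rule ccontr)
  assume "\<not> ?thesis"
  then obtain \<gamma> where gJ: "\<gamma> \<in> J" and gnM: "\<gamma> \<notin> {\<beta> \<in> pos_roots \<Phi> \<Delta>. root_le \<Delta> \<alpha> \<beta>}" by blast
  have Jpos: "J \<subseteq> pos_roots \<Phi> \<Delta>" using J unfolding abelian_ideal_def by blast
  have Jup: "\<And>\<beta> \<gamma>. \<beta> \<in> J \<Longrightarrow> \<gamma> \<in> pos_roots \<Phi> \<Delta> \<Longrightarrow> root_le \<Delta> \<beta> \<gamma> \<Longrightarrow> \<gamma> \<in> J"
    using J unfolding abelian_ideal_def by blast
  have Jab: "\<And>\<beta> \<gamma>. \<beta> \<in> J \<Longrightarrow> \<gamma> \<in> J \<Longrightarrow> \<beta> + \<gamma> \<notin> \<Phi>"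
    using J unfolding abelian_ideal_def by blast
  have JP: "J \<subseteq> \<Phi>" using Jpos unfolding pos_roots_def by auto
  have Jnn: "\<rho> \<in> J \<Longrightarrow> \<forall>a\<in>\<Delta>. co \<rho> a \<ge> 0" for \<rho> using Jpos JP pos_iff by blast
  have aP: "\<alpha> \<in> \<Phi>" using aD DsubPhi by auto
  have ia: "ints \<alpha>" using ints_root[OF aP] .
  have aM: "\<alpha> \<in> pos_roots \<Phi> \<Delta>" using pos_iff[OF aP] co_simple[OF aD] by simp
  have "root_le \<Delta> \<alpha> \<alpha>" using le_iff[OF ia ia] by simp
  with aM sub have aJ: "\<alpha> \<in> J" by blast
  have gP: "\<gamma> \<in> \<Phi>" using gJ JP by auto
  have g0: "co \<gamma> \<alpha> = 0"
  proof -
    have ge: "co \<gamma> \<alpha> \<ge> 0" using Jnn[OF gJ] aD by auto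
    have "co \<gamma> \<alpha> \<in> \<int>" using root_co(1)[OF gP] aD by auto
    moreover have "\<not> co \<gamma> \<alpha> \<ge> 1"
    proof
      assume "co \<gamma> \<alpha> \<ge> 1"
      then have "\<forall>a\<in>\<Delta>. co \<alpha> a \<le> co \<gamma> a" using co_simple[OF aD] Jnn[OF gJ] by auto
      then have "root_le \<Delta> \<alpha> \<gamma>" using le_iff[OF ia ints_root[OF gP]] by simp
      then show False using gnM gJ Jpos by auto
    qed
    ultimately show ?thesis using ge by (auto elim!: Ints_cases)
  qed
  define U where "U = {\<rho> \<in> J. co \<rho> \<alpha> = 0}"
  define g where "g \<rho> = (\<Sum>a\<in>\<Delta>. co \<rho> a)" for \<rho>
  have "U \<subseteq> \<Phi>" using JP unfolding U_def by auto
  then have finU: "finite U" using finPhi finite_subset by blast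
  have "U \<noteq> {}" using gJ g0 unfolding U_def by auto
  then obtain \<delta> where dU: "\<delta> \<in> U" and dmax: "\<And>\<rho>. \<rho> \<in> U \<Longrightarrow> g \<rho> \<le> g \<delta>"
  proof -
    have "Max (g ` U) \<in> g ` U" using finU \<open>U \<noteq> {}\<close> by (intro Max_in) auto
    then obtain \<delta> where "\<delta> \<in> U" "g \<delta> = Max (g ` U)" by auto
    moreover have "\<And>\<rho>. \<rho> \<in> U \<Longrightarrow> g \<rho> \<le> Max (g ` U)" using finU by (intro Max_ge) auto
    ultimately show ?thesis using that by metis
  qed
  have dJ: "\<delta> \<in> J" and d0: "co \<delta> \<alpha> = 0" using dU unfolding U_def by auto
  have dP: "\<delta> \<in> \<Phi>" using dJ JP by auto
  have dnn: "\<forall>a\<in>\<Delta>. co \<delta> a \<ge> 0" using Jnn[OF dJ] .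
  have ds: "\<delta> \<in> span \<Delta>" using root_span[OF dP] .
  have dom: "\<delta> \<bullet> a \<ge> 0" if aD': "a \<in> \<Delta>" for a
  proof (rule ccontr)
    assume "\<not> ?thesis"
    then have neg: "\<delta> \<bullet> a < 0" by simp
    have aP': "a \<in> \<Phi>" using aD' DsubPhi by auto
    have "\<delta> \<noteq> - a"
    proof
      assume "\<delta> = - a"
      then have "co \<delta> a = -1" using co_neg[OF span_base[OF aD']] co_simple[OF aD'] by simp
      then show False using dnn aD' by force
    qed
    then have sP: "\<delta> + a \<in> \<Phi>" using sum_root[OF dP aP' _ neg] by blast
    show False
    proof (cases "a = \<alpha>")
      case True then show False using Jab[OF dJ aJ] sP by simp
    next
      case False
      have coS: "co (\<delta> + a) x = co \<delta> x + (if x = a then 1 else 0)" for x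
        using co_add[OF ds span_base[OF aD']] co_simple[OF aD'] by simp
      have "\<delta> + a \<in> pos_roots \<Phi> \<Delta>" using pos_iff[OF sP] dnn coS by simp
      moreover have "root_le \<Delta> \<delta> (\<delta> + a)" using le_iff[OF ints_root[OF dP] ints_root[OF sP]] coS by simp
      ultimately have "\<delta> + a \<in> J" using Jup[OF dJ] by blast
      moreover have "co (\<delta> + a) \<alpha> = 0" using coS d0 False by simp
      ultimately have "\<delta> + a \<in> U" unfolding U_def by blast
      then have le: "g (\<delta> + a) \<le> g \<delta>" using dmax by blast
      have "g (\<delta> + a) = g \<delta> + (\<Sum>x\<in>\<Delta>. (if x = a then 1 else 0))"
        unfolding g_def by (simp add: coS sum.distrib)
      also have "(\<Sum>x\<in>\<Delta>. (if x = a then 1 else (0::real))) = 1" using aD' finD by simp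
      finally show False using le by simp
    qed
  qed
  define S where "S = {x \<in> \<Delta>. co \<delta> x \<noteq> 0}"
  have SD: "S \<subseteq> \<Delta>" unfolding S_def by auto
  have oS: "orth S" unfolding orth_def
  proof (intro ballI)
    fix s t assume s: "s \<in> S" and t: "t \<in> \<Delta> - S"
    have "0 \<le> \<delta> \<bullet> t" using dom t by auto
    also have "\<delta> \<bullet> t = (\<Sum>x\<in>\<Delta>. co \<delta> x *\<^sub>R x) \<bullet> t" using expand[OF ds] by simp
    also have "\<dots> = (\<Sum>x\<in>\<Delta>. co \<delta> x * (x \<bullet> t))" by (simp add: inner_sum_left)
    finally have ge: "0 \<le> (\<Sum>x\<in>\<Delta>. co \<delta> x * (x \<bullet> t))" .
    have np: "co \<delta> x * (x \<bullet> t) \<le> 0" if x: "x \<in> \<Delta>" for x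
    proof (cases "co \<delta> x = 0")
      case True then show ?thesis by simp
    next
      case False
      then have "x \<noteq> t" using t x unfolding S_def by auto
      then have "x \<bullet> t \<le> 0" using simple_nonpos x t by auto
      then show ?thesis using dnn x mult_nonneg_nonpos by blast
    qed
    have "(\<Sum>x\<in>\<Delta>. - (co \<delta> x * (x \<bullet> t))) = 0"
      using ge sum_nonpos[of \<Delta> "\<lambda>x. co \<delta> x * (x \<bullet> t)"] np by (simp add: sum_negf)
    then have "\<forall>x\<in>\<Delta>. - (co \<delta> x * (x \<bullet> t)) = 0"
      using sum_nonneg_eq_0_iff[OF finD, of "\<lambda>x. - (co \<delta> x * (x \<bullet> t))"] np by simp
    then have "co \<delta> s * (s \<bullet> t) = 0" using s SD by auto
    then show "s \<bullet> t = 0" using s unfolding S_def by simp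
  qed
  define A where "A = {\<rho> \<in> \<Phi>. \<forall>t\<in>\<Delta>-S. co \<rho> t = 0}"
  define B where "B = \<Phi> - A"
  have "A \<union> B = \<Phi>" "A \<inter> B = {}" unfolding A_def B_def by auto
  moreover have "\<delta> \<in> A" unfolding A_def S_def using dP by auto
  moreover have "\<alpha> \<in> B"
  proof -
    have "\<alpha> \<in> \<Delta> - S" using aD d0 unfolding S_def by auto
    moreover have "co \<alpha> \<alpha> = 1" using co_simple[OF aD] by simp
    ultimately show ?thesis unfolding B_def A_def using aP by force
  qed
  moreover have "\<forall>a\<in>A. \<forall>b\<in>B. a \<bullet> b = 0"
  proof (intro ballI)
    fix a b assume a: "a \<in> A" and b: "b \<in> B"
    have aP': "a \<in> \<Phi>" and a0: "\<forall>t\<in>\<Delta>-S. co a t = 0" using a unfolding A_def by auto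
    have bP: "b \<in> \<Phi>" using b unfolding B_def by auto
    have "pure S b" using decomp[OF SD oS bP] .
    then have b0: "\<forall>s\<in>S. co b s = 0" using b bP unfolding pure_def A_def B_def by auto
    have "a \<bullet> b = (\<Sum>x\<in>\<Delta>. co a x *\<^sub>R x) \<bullet> (\<Sum>y\<in>\<Delta>. co b y *\<^sub>R y)"
      using expand[OF root_span[OF aP']] expand[OF root_span[OF bP]] by simp
    also have "\<dots> = (\<Sum>x\<in>\<Delta>. (co a x *\<^sub>R x) \<bullet> (\<Sum>y\<in>\<Delta>. co b y *\<^sub>R y))"
      by (simp only: inner_sum_left)
    also have "\<dots> = (\<Sum>x\<in>\<Delta>. \<Sum>y\<in>\<Delta>. co a x * co b y * (x \<bullet> y))"
      by (simp add: inner_sum_right mult.assoc mult.left_commute)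
    also have "\<dots> = 0"
    proof (intro sum.neutral ballI)
      fix x y assume x: "x \<in> \<Delta>" and y: "y \<in> \<Delta>"
      show "co a x * co b y * (x \<bullet> y) = 0"
      proof (cases "x \<in> S")
        case False then show ?thesis using a0 x by simp
      next
        case True
        show ?thesis
        proof (cases "y \<in> S")
          case True then show ?thesis using b0 by simp
        next
          case False then have "x \<bullet> y = 0" using oS \<open>x \<in> S\<close> y unfolding orth_def by blast
          then show ?thesis by simp
        qed
      qed
    qed
    finally show "a \<bullet> b = 0" .
  qed
  ultimately show False using irr unfolding irreducible_rs_def by blast
qed

end

theorem lemma5p2:
  fixes \<Phi> \<Delta> :: "'a::euclidean_space set" and \<alpha> :: 'a
  assumes "root_system \<Phi>" and "irreducible_rs \<Phi>" and "simple_basis \<Phi> \<Delta>"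
    and "\<alpha> \<in> \<Delta>"
    and "abelian_ideal \<Phi> \<Delta> {\<beta> \<in> pos_roots \<Phi> \<Delta>. root_le \<Delta> \<alpha> \<beta>}"
  shows "maximal_abelian_ideal \<Phi> \<Delta> {\<beta> \<in> pos_roots \<Phi> \<Delta>. root_le \<Delta> \<alpha> \<beta>}"
proof -
  interpret RS \<Phi> \<Delta> using assms(1,3) by unfold_locales
  show ?thesis unfolding maximal_abelian_ideal_def
    using assms(5) main[OF assms(2,4)] by blast
qed

end
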